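(* Let $p=(p_0,\dots,p_{m-1})\in\{0,1\}^m$, $m\ge1$, and let $\tilde c_\infty[p]$ be the limit of the reverse CQCA evolution started from the $v_p$-periodic initial configuration $\tilde c_0[p]$. Then every cell $(x,0)$ with $x\le0$ has a defined sum bit $b_{-x}$ in $\tilde c_\infty[p]$, and the 2-adic integer $\sum_{j\ge0}b_j2^j\in\mathbb{Z}_2$ equals $Q^{-1}(p^\infty)$, the Collatz cyclic number associated to $p$.
   Context: $\mathbb{Z}_2$ is the ring of 2-adic integers. The Collatz map extends to $T:\mathbb{Z}_2\to\mathbb{Z}_2$, $T(z)=z/2$ if $z\equiv0\pmod2$ and $T(z)=(3z+1)/2$ otherwise. $Q:\mathbb{Z}_2\to\{0,1\}^{\mathbb{N}}$, $Q(z)=(T^i(z)\bmod2)_{i\ge0}$, is a bijection (known fact). $p^\infty$ denotes the infinite periodic sequence $pp p\cdots$; $Q^{-1}(p^\infty)$ is the Collatz cyclic number associated to $p$. Notation: $E=(1,0)$, $W=(-1,0)$, $N=(0,1)$, $S=(0,-1)$; $[P]\in\{0,1\}$ equals $1$ iff $P$ holds. States: $\Sigma=\{0,1,\bot\}^2\setminus\{(\bot,0),(\bot,1)\}$, $(s,c)$ with sum bit $s$ and carry bit $c$; undefined if $(\bot,\bot)$, half-defined if $s\in\{0,1\},c=\bot$, defined if $s,c\in\{0,1\}$. The reverse CQCA: one step $F(C)$ of $C:\mathbb{Z}^2\to\Sigma$ first applies the non-local rule giving $C'$: $C'(u)=(0,1)$ if $C(u+W)=(1,\bot)$, $C(u)\in\{(0,\bot),(\bot,\bot)\}$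 and $C(u+iE)\in\{(0,\bot),(\bot,\bot)\}$ for all $i\ge1$; otherwise $C'(u)=C(u)$. Then the local rule on $C'$ at all cells simultaneously: (i) if $C'(u)=(s,\bot)$ half-defined and $C'(u+E)=(s',c')$ defined, $F(C)(u)=(s,[s+s'+c'\ge2])$; (ii) if $C'(u)=(\bot,\bot)$, $C'(u+E)=(s',c')$ is defined and $C'(u+S)$ has sum bit $s''\in\{0,1\}$, then $F(C)(u)=(t,[t+s'+c'\ge2])$ with $t=(s''+s'+c')\bmod2$; (iii) otherwise $F(C)(u)=C'(u)$. Cyclic world: let $k$ be the number of $1$s in $p$ and $v_p=(-m,-k)$. Positions $u_0=(0,0)$, $u_{i+1}=u_i+W$ if $p_i=0$ and $u_{i+1}=u_i+W+S$ if $p_i=1$ (so $u_m=u_0+v_p$). The configuration $\tilde c_0[p]$ is defined by $\tilde c_0[p](u_i+tv_p)=(p_i,\bot)$ for $0\le i<m$, $t\in\mathbb{Z}$, and $(\bot,\bot)$ at all other cells; it is invariant under translation by $v_p$ (equivalently it lives on $\mathbb{Z}^2$ modulo $v_p$), and this invariance is preserved by $F$. Each cell's state in $F^i(\tilde c_0[p])$ is eventually constant; $\tilde c_\infty[p]$ is the pointwise limit. *)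

theory Defs
  imports Main
begin

typedef z2 = "{a :: nat \<Rightarrow> int. \<forall>n. 0 \<le> a n \<and> a n < 2 ^ n \<and> a (Suc n) mod 2 ^ n = a n}"
  by (rule exI[of _ "\<lambda>_. 0"]) simp

definition z2_mod2 :: "z2 \<Rightarrow> nat" where
  "z2_mod2 z = nat (Rep_z2 z 1 mod 2)"

definition collatzT :: "z2 \<Rightarrow> z2" where
  "collatzT z = Abs_z2 (\<lambda>n. if even (Rep_z2 z 1) then Rep_z2 z (Suc n) div 2
                            else ((3 * Rep_z2 z (Suc n) + 1) div 2) mod 2 ^ n)"

definition parityQ :: "z2 \<Rightarrow> (nat \<Rightarrow> nat)" where
  "parityQ z = (\<lambda>i. z2_mod2 ((collatzT ^^ i) z))"

definition z2_of_digits :: "(nat \<Rightarrow> bool) \<Rightarrow> z2" where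
  "z2_of_digits b = Abs_z2 (\<lambda>n. \<Sum>j<n. of_bool (b j) * 2 ^ j)"

definition periodic_seq :: "bool list \<Rightarrow> nat \<Rightarrow> nat" where
  "periodic_seq p = (\<lambda>i. of_bool (p ! (i mod length p)))"

definition collatz_cyclic :: "bool list \<Rightarrow> z2" where
  "collatz_cyclic p = inv parityQ (periodic_seq p)"

text \<open>States: Undef = (\<bottom>,\<bottom>), Half s = (s,\<bottom>), Def s c = (s,c); bits as bool (True = 1).\<close>
datatype st = Undef | Half bool | Def bool bool

type_synonym config = "int \<times> int \<Rightarrow> st"

definition dirE :: "int \<times> int" where "dirE = (1, 0)"
definition dirW :: "int \<times> int" where "dirW = (-1, 0)"
definition dirS :: "int \<times> int" where "dirS = (0, -1)"

definition vadd :: "int \<times> int \<Rightarrow> int \<times> int \<Rightarrow> int \<times> int" where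
  "vadd u w = (fst u + fst w, snd u + snd w)"

definition vscale :: "int \<Rightarrow> int \<times> int \<Rightarrow> int \<times> int" where
  "vscale t w = (t * fst w, t * snd w)"

fun sumbit :: "st \<Rightarrow> bool option" where
  "sumbit Undef = None"
| "sumbit (Half s) = Some s"
| "sumbit (Def s c) = Some s"

definition zero_or_undef :: "st \<Rightarrow> bool" where
  "zero_or_undef x \<longleftrightarrow> x = Half False \<or> x = Undef"

definition nonlocal_step :: "config \<Rightarrow> config" where
  "nonlocal_step C = (\<lambda>u.
     if C (vadd u dirW) = Half True \<and> zero_or_undef (C u)
        \<and> (\<forall>i::int. i \<ge> 1 \<longrightarrow> zero_or_undef (C (vadd u (vscale i dirE))))
     then Def False True else C u)"

definition local_step :: "config \<Rightarrow> config" where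
  "local_step C' = (\<lambda>u.
     case (C' u, C' (vadd u dirE)) of
       (Half s, Def s' c') \<Rightarrow>
          Def s (of_bool s + of_bool s' + of_bool c' \<ge> (2::nat))
     | (Undef, Def s' c') \<Rightarrow>
          (case sumbit (C' (vadd u dirS)) of
             Some s'' \<Rightarrow>
               (let t = odd (of_bool s'' + of_bool s' + of_bool c' :: nat)
                in Def t (of_bool t + of_bool s' + of_bool c' \<ge> (2::nat)))
           | None \<Rightarrow> C' u)
     | _ \<Rightarrow> C' u)"

definition cqca_step :: "config \<Rightarrow> config" where
  "cqca_step C = local_step (nonlocal_step C)"

definition num_ones :: "bool list \<Rightarrow> nat" where
  "num_ones p = length (filter id p)"

definition vp :: "bool list \<Rightarrow> int \<times> int" where
  "vp p = (- int (length p), - int (num_ones p))"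

fun upos :: "bool list \<Rightarrow> nat \<Rightarrow> int \<times> int" where
  "upos p 0 = (0, 0)"
| "upos p (Suc i) = (if p ! i then vadd (vadd (upos p i) dirW) dirS else vadd (upos p i) dirW)"

definition init_config :: "bool list \<Rightarrow> config" where
  "init_config p = (\<lambda>u.
     if \<exists>i t. i < length p \<and> u = vadd (upos p i) (vscale t (vp p))
     then Half (p ! (SOME i. i < length p \<and> (\<exists>t. u = vadd (upos p i) (vscale t (vp p)))))
     else Undef)"

definition limit_config :: "bool list \<Rightarrow> config" where
  "limit_config p = (\<lambda>u. THE s. \<exists>N. \<forall>n\<ge>N. (cqca_step ^^ n) (init_config p) u = s)"

end

theory Submission
  imports Defs
begin


fun isDef :: "st \<Rightarrow> bool" where
  "isDef (Def _ _) = True" | "isDef _ = False"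

fun carry :: "st \<Rightarrow> bool" where
  "carry (Def _ c) = c" | "carry _ = False"

lemma vadd_simps[simp]:
  "vadd (a,b) dirE = (a+1,b)" "vadd (a,b) dirW = (a-1,b)" "vadd (a,b) dirS = (a,b-1)"
  "vadd (a,b) (vscale i dirE) = (a+i,b)"
  by (simp_all add: vadd_def dirE_def dirW_def dirS_def vscale_def)

lemma nonlocal_cases:
  "nonlocal_step C u = C u \<or> (nonlocal_step C u = Def False True \<and> zero_or_undef (C u) \<and> C (vadd u dirW) = Half True)"
  by (simp add: nonlocal_step_def)

lemma local_cases:
  "local_step C u = C u
   \<or> (\<exists>s s' c'. C u = Half s \<and> C (vadd u dirE) = Def s' c' \<and>
        local_step C u = Def s (of_bool s + of_bool s' + of_bool c' \<ge> (2::nat)))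
   \<or> (\<exists>s' c' s''. C u = Undef \<and> C (vadd u dirE) = Def s' c' \<and> sumbit (C (vadd u dirS)) = Some s'' \<and>
        local_step C u = Def (odd (of_bool s'' + of_bool s' + of_bool c' :: nat))
          (of_bool (odd (of_bool s'' + of_bool s' + of_bool c' :: nat)) + of_bool s' + of_bool c' \<ge> (2::nat)))"
  by (auto simp: local_step_def Let_def split: st.splits option.splits)

lemma local_def_keep: "isDef (C u) \<Longrightarrow> local_step C u = C u"
  by (cases "C u") (auto simp: local_step_def)

lemma nonlocal_def_keep: "isDef (C u) \<Longrightarrow> nonlocal_step C u = C u"
  by (cases "C u") (auto simp: nonlocal_step_def zero_or_undef_def)

lemma step_def_keep: "isDef (C u) \<Longrightarrow> cqca_step C u = C u"
  unfolding cqca_step_def by (simp add: nonlocal_def_keep local_def_keep)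

lemma local_sumbit: "sumbit (C u) = Some s \<Longrightarrow> sumbit (local_step C u) = Some s"
  using local_cases[of C u] by auto

lemma nonlocal_sumbit: "sumbit (C u) = Some s \<Longrightarrow> sumbit (nonlocal_step C u) = Some s"
  using nonlocal_cases[of C u] by (auto simp: zero_or_undef_def)

lemma step_sumbit: "sumbit (C u) = Some s \<Longrightarrow> sumbit (cqca_step C u) = Some s"
  unfolding cqca_step_def by (intro local_sumbit nonlocal_sumbit)

lemma local_or_def: "local_step C u = C u \<or> isDef (local_step C u)"
  using local_cases[of C u] by auto

lemma nonlocal_or_def: "nonlocal_step C u = C u \<or> isDef (nonlocal_step C u)"
  using nonlocal_cases[of C u] by auto

lemma step_or_def: "cqca_step C u = C u \<or> isDef (cqca_step C u)"
  using local_or_def[of "nonlocal_step C" u] nonlocal_or_def[of C u] local_def_keep[of "nonlocal_step C" u]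
  unfolding cqca_step_def by auto

abbreviation CC :: "bool list \<Rightarrow> nat \<Rightarrow> config" where
  "CC p n \<equiv> (cqca_step ^^ n) (init_config p)"

lemma CC_Suc: "CC p (Suc n) = cqca_step (CC p n)" by simp

lemma CC_def_persist: "isDef (CC p n u) \<Longrightarrow> n \<le> k \<Longrightarrow> CC p k u = CC p n u"
proof (induction k)
  case 0 then show ?case by simp
next
  case (Suc k)
  show ?case
  proof (cases "n = Suc k")
    case False
    then have "CC p k u = CC p n u" using Suc by simp
    then show ?thesis using Suc.prems step_def_keep[of "CC p k" u] by simp
  qed simp
qed

lemma CC_sumbit_persist: "sumbit (CC p n u) = Some s \<Longrightarrow> n \<le> k \<Longrightarrow> sumbit (CC p k u) = Some s"
proof (induction k)
  case 0 then show ?case by simp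
next
  case (Suc k)
  show ?case
  proof (cases "n = Suc k")
    case False
    then have "sumbit (CC p k u) = Some s" using Suc by simp
    then show ?thesis using step_sumbit[of "CC p k" u] by simp
  qed (use Suc in simp)
qed

lemma CC_init_or_def: "CC p n u = init_config p u \<or> isDef (CC p n u)"
proof (induction n)
  case 0 then show ?case by simp
next
  case (Suc n)
  then show ?case using step_or_def[of "CC p n" u] step_def_keep[of "CC p n" u] by auto
qed

lemma CC_eventually: "\<exists>N. \<forall>n\<ge>N. CC p n u = CC p N u"
proof (cases "\<exists>n. isDef (CC p n u)")
  case True
  then obtain n where "isDef (CC p n u)" by blast
  then show ?thesis using CC_def_persist by blast
next
  case False
  then have "\<forall>n. CC p n u = CC p 0 u" using CC_init_or_def[where p=p and u=u] by auto
  then show ?thesis by blast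
qed

lemma limit_eq: "\<exists>N. \<forall>n\<ge>N. CC p n u = limit_config p u"
proof -
  obtain N where N: "\<forall>n\<ge>N. CC p n u = CC p N u" using CC_eventually by blast
  have "limit_config p u = CC p N u"
    unfolding limit_config_def
  proof (rule the_equality)
    show "\<exists>N'. \<forall>n\<ge>N'. CC p n u = CC p N u" using N by blast
  next
    fix s assume "\<exists>N'. \<forall>n\<ge>N'. CC p n u = s"
    then obtain N' where "\<forall>n\<ge>N'. CC p n u = s" by blast
    then have "CC p (max N N') u = s" by (meson max.cobounded2)
    moreover have "CC p (max N N') u = CC p N u" using N by (meson max.cobounded1)
    ultimately show "s = CC p N u" by simp
  qed
  note lim = this
  show ?thesis
  proof (intro exI allI impI)
    fix n assume "N \<le> n"
    with N have "CC p n u = CC p N u" by blast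
    with lim show "CC p n u = limit_config p u" by simp
  qed
qed



definition PP :: "bool list \<Rightarrow> int \<Rightarrow> bool" where "PP p i = p ! nat (i mod int (length p))"
definition kk :: "bool list \<Rightarrow> nat \<Rightarrow> int" where "kk p j = int (length (filter id (take j p)))"
definition KK :: "bool list \<Rightarrow> int \<Rightarrow> int" where
  "KK p i = kk p (nat (i mod int (length p))) + (i div int (length p)) * int (num_ones p)"

lemma kk_Suc: "j < length p \<Longrightarrow> kk p (Suc j) = kk p j + of_bool (p ! j)"
  by (simp add: kk_def take_Suc_conv_app_nth)
lemma kk_len: "kk p (length p) = int (num_ones p)" by (simp add: kk_def num_ones_def)
lemma kk_0: "kk p 0 = 0" by (simp add: kk_def)

context fixes p :: "bool list" assumes m1: "1 \<le> length p" begin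

lemma KK_Suc: "KK p (i+1) = KK p i + of_bool (PP p i)"
proof -
  define m where "m = int (length p)"
  have "length p > 0" using m1 by linarith
  then have m0: "m > 0" by (simp add: m_def)
  define q where "q = i div m"
  define r where "r = i mod m"
  have r0: "0 \<le> r" and rm: "r < m" using m0 by (simp_all add: r_def)
  have iq: "i = m*q + r" by (simp add: q_def r_def)
  have nr: "nat r < length p" using rm r0 m_def by linarith
  have KKi: "KK p i = kk p (nat r) + q * int (num_ones p)"
    unfolding KK_def m_def[symmetric] q_def r_def ..
  have PPi: "PP p i = p ! nat r" unfolding PP_def m_def[symmetric] r_def ..
  show ?thesis
  proof (cases "r + 1 < m")
    case True
    have e: "i+1 = m*q + (r+1)" using iq by simp
    have d1: "(i+1) div m = q" by (rule int_div_pos_eq[OF e]) (use r0 True in auto)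
    have d2: "(i+1) mod m = r+1" by (rule int_mod_pos_eq[OF e]) (use r0 True in auto)
    have n1: "nat (r+1) = Suc (nat r)" using r0 by simp
    have KK1: "KK p (i+1) = kk p (Suc (nat r)) + q * int (num_ones p)"
      unfolding KK_def m_def[symmetric] d1 d2 n1 ..
    show ?thesis using KK1 KKi PPi kk_Suc[OF nr] by simp
  next
    case False
    then have rm1: "r + 1 = m" using rm by simp
    have e: "i+1 = m*(q+1) + 0" using iq rm1 by (simp add: algebra_simps)
    have d1: "(i+1) div m = q+1" by (rule int_div_pos_eq[OF e]) (use m0 in auto)
    have d2: "(i+1) mod m = 0" by (rule int_mod_pos_eq[OF e]) (use m0 in auto)
    have KK1: "KK p (i+1) = kk p 0 + (q+1) * int (num_ones p)"
      unfolding KK_def m_def[symmetric] d1 d2 by simp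
    have sl: "Suc (nat r) = length p" using rm1 m_def r0 by linarith
    have "kk p (nat r) + of_bool (p ! nat r) = int (num_ones p)"
      using kk_Suc[OF nr] kk_len[of p] sl by simp
    then show ?thesis using KK1 KKi PPi kk_0 by (simp add: algebra_simps)
  qed
qed

lemma KK_add_mult: "KK p (i + t * int (length p)) = KK p i + t * int (num_ones p)"
proof -
  have "length p > 0" using m1 by linarith
  then have "int (length p) \<noteq> 0" by simp
  then show ?thesis by (simp add: KK_def algebra_simps)
qed

lemma PP_add_mult: "PP p (i + t * int (length p)) = PP p i"
  by (simp add: PP_def)

lemma KK_0: "KK p 0 = 0" by (simp add: KK_def kk_0)

lemma KK_mono: "i \<le> j \<Longrightarrow> KK p i \<le> KK p j"
proof (induction j rule: int_ge_induct)
  case (step j) then show ?case using KK_Suc[of j] by simp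
qed simp

lemma KK_le: "i \<le> j \<Longrightarrow> KK p j \<le> KK p i + (j - i)"
proof (induction j rule: int_ge_induct)
  case (step j) then show ?case using KK_Suc[of j] by simp
qed simp

lemma KK_ivt: "j \<le> i \<Longrightarrow> KK p j \<le> c \<Longrightarrow> c < KK p i \<Longrightarrow> \<exists>l. j \<le> l \<and> l < i \<and> KK p l = c \<and> PP p l"
proof (induction i rule: int_ge_induct)
  case base then show ?case by simp
next
  case (step i)
  note jh = \<open>j \<le> i\<close>
  show ?case
  proof (cases "c < KK p i")
    case True
    have "\<exists>l. j \<le> l \<and> l < i \<and> KK p l = c \<and> PP p l" using step(2)[OF step.prems(1) True] .
    then obtain l where "j \<le> l" "l < i" "KK p l = c" "PP p l" by blast
    then show ?thesis by (intro exI[of _ l]) simp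
  next
    case False
    have c2: "c < KK p i + of_bool (PP p i)" using step.prems(2) KK_Suc[of i] by simp
    have pi: "PP p i" using False c2 by (cases "PP p i") auto
    have "KK p i = c" using False c2 pi by simp
    then show ?thesis using jh pi by (intro exI[of _ i]) simp
  qed
qed

lemma upos_char: "i < length p \<Longrightarrow> upos p i = (- int i, - KK p (int i))"
proof (induction i)
  case 0 then show ?case by (simp add: KK_0)
next
  case (Suc i)
  have pp: "PP p (int i) = p ! i" using Suc.prems by (simp add: PP_def)
  show ?case using Suc KK_Suc[of "int i"] pp
    by (auto simp: vadd_def dirW_def dirS_def add.commute)
qed

lemma init_char: "init_config p (x,y) = (if y = - KK p (-x) then Half (PP p (-x)) else Undef)"
proof -
  define m where "m = int (length p)"
  have "length p > 0" using m1 by linarith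
  then have m0: "m > 0" by (simp add: m_def)
  have pt: "vadd (upos p i) (vscale t (vp p)) = (- (int i + t*m), - KK p (int i + t*m))"
    if "i < length p" for i t
    using upos_char[OF that] KK_add_mult[of "int i" t]
    by (simp add: vadd_def vscale_def vp_def m_def algebra_simps)
  have ex: "(\<exists>i t. i < length p \<and> (x,y) = vadd (upos p i) (vscale t (vp p))) \<longleftrightarrow> y = - KK p (-x)"
  proof
    assume "\<exists>i t. i < length p \<and> (x,y) = vadd (upos p i) (vscale t (vp p))"
    then obtain i t where "i < length p" "(x,y) = vadd (upos p i) (vscale t (vp p))" by blast
    then have e1: "-x = int i + t*m" and e2: "y = - KK p (int i + t*m)" using pt by auto
    show "y = - KK p (-x)" unfolding e1 by (rule e2)
  next
    assume y: "y = - KK p (-x)"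
    define i where "i = nat ((-x) mod m)"
    define t where "t = (-x) div m"
    have "i < length p" using m0 m_def i_def by (simp add: nat_less_iff)
    moreover have "-x = int i + t*m" using m0 i_def t_def by simp
    ultimately have il: "i < length p" and e: "-x = int i + t*m" by simp_all
    from y have ey: "y = -KK p (int i + t*m)" by (simp only: e)
    have ex': "x = - (int i + t*m)" using e by simp
    have "(x,y) = vadd (upos p i) (vscale t (vp p))" unfolding pt[OF il] using ex' ey by simp
    then show "\<exists>i t. i < length p \<and> (x,y) = vadd (upos p i) (vscale t (vp p))"
      using \<open>i < length p\<close> by blast
  qed
  have sel: "p ! i = PP p (-x)" if il: "i < length p" and tex: "\<exists>t. (x,y) = vadd (upos p i) (vscale t (vp p))" for i
  proof -
    obtain t where "(x,y) = vadd (upos p i) (vscale t (vp p))" using tex by blast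
    then have "-x = int i + t*m" using pt[OF il] by simp
    then have "(-x) mod m = int i" using il m_def int_mod_pos_eq[of "-x" m t "int i"]
      by (simp add: algebra_simps)
    then show ?thesis by (simp add: PP_def m_def)
  qed
  show ?thesis
  proof (cases "y = - KK p (-x)")
    case True
    define i0 where "i0 = (SOME i. i < length p \<and> (\<exists>t. (x,y) = vadd (upos p i) (vscale t (vp p))))"
    have c: "\<exists>i t. i < length p \<and> (x,y) = vadd (upos p i) (vscale t (vp p))" using ex True by blast
    have "i0 < length p \<and> (\<exists>t. (x,y) = vadd (upos p i0) (vscale t (vp p)))"
      unfolding i0_def by (rule someI_ex) (use c in blast)
    then have "p ! i0 = PP p (-x)" using sel by blast
    moreover have "init_config p (x,y) = Half (p ! i0)" unfolding init_config_def i0_def using c by simp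
    ultimately show ?thesis using True by simp
  next
    case False
    then have "\<not> (\<exists>i t. i < length p \<and> (x,y) = vadd (upos p i) (vscale t (vp p)))" using ex by blast
    then show ?thesis using False unfolding init_config_def by simp
  qed
qed

end


definition seed :: "bool list \<Rightarrow> int \<times> int \<Rightarrow> bool" where
  "seed p u \<longleftrightarrow> (\<exists>l. PP p l \<and> u = (- l + 1, - KK p l))"

definition goodDef :: "bool list \<Rightarrow> config \<Rightarrow> int \<times> int \<Rightarrow> bool" where
  "goodDef p C u \<longleftrightarrow> (\<forall>s c. C u = Def s c \<longrightarrow>
     (seed p u \<and> s = False \<and> c = True) \<or>
     (\<exists>s' c'. C (vadd u dirE) = Def s' c' \<and> c = (of_bool s + of_bool s' + of_bool c' \<ge> (2::nat)) \<and>
        (init_config p u = Undef \<longrightarrow>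
           (\<exists>s''. sumbit (C (vadd u dirS)) = Some s'' \<and> s = odd (of_bool s'' + of_bool s' + of_bool c' :: nat)))))"

lemma local_undef: "C u = Undef \<Longrightarrow> C (vadd u dirE) = Def s' c' \<Longrightarrow> sumbit (C (vadd u dirS)) = Some s''
  \<Longrightarrow> isDef (local_step C u)"
  by (simp add: local_step_def Let_def)

lemma nonlocal_id: "(\<And>u. C u \<noteq> Half True) \<Longrightarrow> nonlocal_step C = C"
  by (simp add: nonlocal_step_def fun_eq_iff)

lemma isDef_sumbit: "isDef x \<Longrightarrow> sumbit x \<noteq> None"
  by (cases x) auto

context fixes p :: "bool list" assumes m1: "1 \<le> length p" begin

lemma init_path: "init_config p (-i, y) = (if y = - KK p i then Half (PP p i) else Undef)"
  using init_char[OF m1, of "-i" y] by simp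

lemma CC_Half: "CC p n u = Half s \<Longrightarrow> init_config p u = Half s"
  using CC_init_or_def[where p=p and n=n and u=u] by auto

lemma CC_Undef: "CC p n u = Undef \<Longrightarrow> init_config p u = Undef"
  using CC_init_or_def[where p=p and n=n and u=u] by auto

lemma step1:
  assumes "PP p l"
  shows "CC p 1 (-l, -KK p l) = Def True True" "CC p 1 (-l+1, -KK p l) = Def False True"
proof -
  define C0 where "C0 = init_config p"
  define C' where "C' = nonlocal_step C0"
  have c0l: "C0 (-l, -KK p l) = Half True" using assms by (simp add: C0_def init_path)
  have zo: "zero_or_undef (C0 (-l+1+j, -KK p l))" if "j \<ge> 0" for j
  proof -
    have e: "-(-l+1+j) = l - 1 - j" by simp
    show ?thesis
    proof (cases "KK p l = KK p (l-1-j)")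
      case True
      have "KK p (l-1-j+1) \<le> KK p l" using KK_mono[OF m1] that by simp
      then have "\<not> PP p (l-1-j)" using True KK_Suc[OF m1, of "l-1-j"] by auto
      then show ?thesis unfolding C0_def init_char[OF m1] e using True by (simp add: zero_or_undef_def)
    next
      case False
      then show ?thesis unfolding C0_def init_char[OF m1] e by (simp add: zero_or_undef_def)
    qed
  qed
  have c'1: "C' (-l+1, -KK p l) = Def False True"
  proof -
    have "\<forall>i::int. i \<ge> 1 \<longrightarrow> zero_or_undef (C0 (vadd (-l+1, -KK p l) (vscale i dirE)))"
      using zo by simp
    moreover have "zero_or_undef (C0 (-l+1, -KK p l))" using zo[of 0] by simp
    moreover have "C0 (vadd (-l+1, -KK p l) dirW) = Half True" using c0l by simp
    ultimately show ?thesis unfolding C'_def nonlocal_step_def by simp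
  qed
  have c'0: "C' (-l, -KK p l) = Half True"
    using c0l unfolding C'_def nonlocal_step_def by (simp add: zero_or_undef_def)
  have CC1: "CC p 1 = local_step C'" by (simp add: C'_def C0_def cqca_step_def)
  show "CC p 1 (-l, -KK p l) = Def True True"
    unfolding CC1 using c'0 c'1 by (simp add: local_step_def)
  show "CC p 1 (-l+1, -KK p l) = Def False True"
    unfolding CC1 using c'1 local_def_keep[of C' "(-l+1, -KK p l)"] by simp
qed

lemma no_half_true: "1 \<le> n \<Longrightarrow> CC p n u \<noteq> Half True"
proof
  assume n: "1 \<le> n" and h: "CC p n u = Half True"
  obtain x y where u: "u = (x,y)" by (cases u)
  have "init_config p (x,y) = Half True" using CC_Half h u by simp
  then have y: "y = - KK p (-x)" and pp: "PP p (-x)" unfolding init_char[OF m1]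
    by (auto split: if_splits)
  have "CC p 1 (x, y) = Def True True" using step1(1)[OF pp] y by simp
  then have "CC p n (x,y) = Def True True" using CC_def_persist[where p=p and n=1 and u="(x,y)" and k=n] n by simp
  then show False using h u by simp
qed

lemma CC_Suc_late: "1 \<le> n \<Longrightarrow> CC p (Suc n) = local_step (CC p n)"
  using nonlocal_id[of "CC p n"] no_half_true by (simp add: cqca_step_def)

lemma good_inv: "goodDef p (CC p n) u"
proof (induction n arbitrary: u)
  case 0
  show ?case unfolding goodDef_def
    by (cases u) (simp add: init_char[OF m1])
next
  case (Suc n)
  define C where "C = CC p n"
  define C' where "C' = nonlocal_step C"
  have D: "CC p (Suc n) = local_step C'" by (simp add: C_def C'_def cqca_step_def)
  show ?case unfolding goodDef_def
  proof (intro allI impI)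
    fix s c assume Du: "CC p (Suc n) u = Def s c"
    show "(seed p u \<and> s = False \<and> c = True) \<or>
     (\<exists>s' c'. CC p (Suc n) (vadd u dirE) = Def s' c' \<and> c = (of_bool s + of_bool s' + of_bool c' \<ge> (2::nat)) \<and>
        (init_config p u = Undef \<longrightarrow>
           (\<exists>s''. sumbit (CC p (Suc n) (vadd u dirS)) = Some s'' \<and> s = odd (of_bool s'' + of_bool s' + of_bool c' :: nat))))"
    proof (cases "isDef (C u)")
      case True
      then have Cu: "C u = Def s c" using Du step_def_keep[of C u] by (simp add: C_def)
      have g: "goodDef p C u" using Suc.IH C_def by simp
      show ?thesis
      proof (cases "seed p u \<and> s = False \<and> c = True")
        case True then show ?thesis by blast
      next
        case False
        then obtain s' c' where e: "C (vadd u dirE) = Def s' c'" and cc: "c = (of_bool s + of_bool s' + of_bool c' \<ge> (2::nat))"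
          and un: "init_config p u = Undef \<longrightarrow>
           (\<exists>s''. sumbit (C (vadd u dirS)) = Some s'' \<and> s = odd (of_bool s'' + of_bool s' + of_bool c' :: nat))"
          using g Cu unfolding goodDef_def by blast
        have e': "CC p (Suc n) (vadd u dirE) = Def s' c'"
          using e step_def_keep[of C "vadd u dirE"] by (simp add: C_def)
        have un': "init_config p u = Undef \<longrightarrow>
           (\<exists>s''. sumbit (CC p (Suc n) (vadd u dirS)) = Some s'' \<and> s = odd (of_bool s'' + of_bool s' + of_bool c' :: nat))"
        proof
          assume "init_config p u = Undef"
          then obtain s'' where s1: "sumbit (C (vadd u dirS)) = Some s''" and s2: "s = odd (of_bool s'' + of_bool s' + of_bool c' :: nat)"
            using un by blast
          have CCs: "CC p (Suc n) = cqca_step C" by (simp add: C_def)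
          have "sumbit (cqca_step C (vadd u dirS)) = Some s''" by (rule step_sumbit[of C "vadd u dirS", OF s1])
          then have "sumbit (CC p (Suc n) (vadd u dirS)) = Some s''" by (simp only: CCs)
          then show "\<exists>s''. sumbit (CC p (Suc n) (vadd u dirS)) = Some s'' \<and> s = odd (of_bool s'' + of_bool s' + of_bool c' :: nat)"
            using s2 by blast
        qed
        show ?thesis using e' cc un' by blast
      qed
    next
      case nd: False
      show ?thesis
      proof (cases "C' u = C u")
        case False
        then have fired: "C' u = Def False True" "C (vadd u dirW) = Half True"
          using nonlocal_cases[of C u] by (auto simp: C'_def)
        then have "CC p (Suc n) u = Def False True" using D local_def_keep[of C' u] by simp
        then have sc: "s = False" "c = True" using Du by auto
        obtain x y where u: "u = (x,y)" by (cases u)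
        have "init_config p (x-1,y) = Half True" using CC_Half fired(2) u C_def by simp
        then have y: "y = - KK p (1-x)" and pp: "PP p (1-x)" unfolding init_char[OF m1]
          by (auto split: if_splits)
        have "seed p u" unfolding seed_def u using y pp by (intro exI[of _ "1-x"]) simp
        then show ?thesis using sc by blast
      next
        case True
        have "local_step C' u \<noteq> C' u"
        proof
          assume a: "local_step C' u = C' u"
          have "CC p (Suc n) u = local_step C' u" using D by simp
          then have "C u = Def s c" using a True Du by simp
          then show False using nd by simp
        qed
        then consider
          (h) s0 s' c' where "C' u = Half s0" "C' (vadd u dirE) = Def s' c'"
            "local_step C' u = Def s0 (of_bool s0 + of_bool s' + of_bool c' \<ge> (2::nat))"
        | (un) s' c' s'' where "C' u = Undef" "C' (vadd u dirE) = Def s' c'" "sumbit (C' (vadd u dirS)) = Some s''"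
            "local_step C' u = Def (odd (of_bool s'' + of_bool s' + of_bool c' :: nat))
          (of_bool (odd (of_bool s'' + of_bool s' + of_bool c' :: nat)) + of_bool s' + of_bool c' \<ge> (2::nat))"
          using local_cases[of C' u] by blast
        then show ?thesis
        proof cases
          case h
          have Dsuc: "CC p (Suc n) = local_step C'" using D by simp
          have "C u = Half s0" using h(1) True by simp
          then have i0: "init_config p u = Half s0" using CC_Half[where n=n and u=u and s=s0] unfolding C_def by simp
          have "local_step C' (vadd u dirE) = Def s' c'" using local_def_keep[of C' "vadd u dirE"] h(2) by simp
          then have e: "CC p (Suc n) (vadd u dirE) = Def s' c'" unfolding Dsuc .
          have "Def s c = Def s0 (of_bool s0 + of_bool s' + of_bool c' \<ge> (2::nat))"
            using Du h(3) unfolding Dsuc by metis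
          then have ss: "s = s0" and cc: "c = (of_bool s0 + of_bool s' + of_bool c' \<ge> (2::nat))"
            by (simp_all only: st.inject)
          show ?thesis
            apply (rule disjI2)
            apply (rule exI[of _ s'], rule exI[of _ c'])
            using e cc i0 ss by simp
        next
          case un
          have Dsuc: "CC p (Suc n) = local_step C'" using D by simp
          have "local_step C' (vadd u dirE) = Def s' c'" using local_def_keep[of C' "vadd u dirE"] un(2) by simp
          then have e: "CC p (Suc n) (vadd u dirE) = Def s' c'" unfolding Dsuc .
          have "sumbit (local_step C' (vadd u dirS)) = Some s''" by (rule local_sumbit[of C' "vadd u dirS", OF un(3)])
          then have so: "sumbit (CC p (Suc n) (vadd u dirS)) = Some s''" unfolding Dsuc .
          have "Def s c = Def (odd (of_bool s'' + of_bool s' + of_bool c' :: nat))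
          (of_bool (odd (of_bool s'' + of_bool s' + of_bool c' :: nat)) + of_bool s' + of_bool c' \<ge> (2::nat))"
            using Du un(4) unfolding Dsuc by metis
          then have ss: "s = odd (of_bool s'' + of_bool s' + of_bool c' :: nat)"
            and cc0: "c = (of_bool (odd (of_bool s'' + of_bool s' + of_bool c' :: nat)) + of_bool s' + of_bool c' \<ge> (2::nat))"
            by (simp_all only: st.inject)
          have cc: "c = (of_bool s + of_bool s' + of_bool c' \<ge> (2::nat))" using cc0 unfolding ss[symmetric] .
          show ?thesis
            apply (rule disjI2)
            apply (rule exI[of _ s'], rule exI[of _ c'])
            using e cc so ss by blast
        qed
      qed
    qed
  qed
qed

end


context fixes p :: "bool list" assumes m1: "1 \<le> length p" begin

lemma hasone_k: "PP p l \<Longrightarrow> 1 \<le> num_ones p"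
proof -
  assume "PP p l"
  then have "p ! nat (l mod int (length p)) = True" by (simp add: PP_def)
  moreover have "nat (l mod int (length p)) < length p"
  proof -
    have "length p > 0" using m1 by linarith
    then have "int (length p) > 0" by simp
    then have "l mod int (length p) < int (length p)" "0 \<le> l mod int (length p)" by simp_all
    then show ?thesis by (simp add: nat_less_iff)
  qed
  ultimately have "True \<in> set p" by (metis nth_mem)
  then have "filter id p \<noteq> []" by (auto simp: filter_empty_conv)
  then show ?thesis by (simp add: num_ones_def Suc_le_eq)
qed

lemma path_end:
  assumes one: "PP p l0" and h: "1 \<le> y + KK p i"
  shows "\<exists>b. b < i \<and> KK p b = -y \<and> PP p b"
proof -
  define t where "t = KK p i + y"
  have t0: "t \<ge> 0" using h t_def by simp
  define j where "j = i + (-t) * int (length p)"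
  have k1: "1 \<le> int (num_ones p)" using hasone_k[OF one] by simp
  have "KK p j = KK p i - t * int (num_ones p)" unfolding j_def KK_add_mult[OF m1] by simp
  also have "\<dots> \<le> KK p i - t" using mult_left_mono[OF k1 t0] by simp
  finally have kj: "KK p j \<le> -y" using t_def by simp
  have ji: "j \<le> i" using t0 m1 unfolding j_def by (simp add: mult_nonneg_nonneg)
  obtain b where "j \<le> b" "b < i" "KK p b = -y" "PP p b"
    using KK_ivt[OF m1 ji kj] h by auto
  then show ?thesis by blast
qed

lemma isDef_ex: "isDef x \<Longrightarrow> \<exists>s c. x = Def s c" by (cases x) auto

lemma def_ev:
  "b < i \<Longrightarrow> KK p b = -y \<Longrightarrow> PP p b \<Longrightarrow> \<exists>n. isDef (CC p n (-i, y))"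
proof (induction "nat (i - b)" arbitrary: i y b rule: less_induct)
  case less
  have kb1: "KK p (b+1) = -y + 1" using KK_Suc[OF m1, of b] less.prems by simp
  have kbi: "KK p (b+1) \<le> KK p i" using KK_mono[OF m1] less.prems by simp
  obtain n1 where n1: "isDef (CC p n1 (-i+1, y))"
  proof (cases "i - 1 = b")
    case True
    have "CC p 1 (-b, -KK p b) = Def True True" using step1(1)[OF m1 less.prems(3)] .
    then have "isDef (CC p 1 (-i+1, y))" using True less.prems(2) by (simp add: algebra_simps)
    then show ?thesis using that by blast
  next
    case False
    then have "\<exists>n. isDef (CC p n (-(i-1), y))"
      using less.hyps[of "i-1" b y] less.prems by simp
    then have "\<exists>n. isDef (CC p n (-i+1, y))" by (simp add: algebra_simps)
    then show ?thesis using that by blast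
  qed
  obtain n2 s'' where n2: "sumbit (CC p n2 (-i, y-1)) = Some s''"
  proof (cases "y - 1 = - KK p i")
    case True
    have "sumbit (CC p 0 (-i, y-1)) = Some (PP p i)" using True by (simp add: init_path[OF m1])
    then show ?thesis using that by blast
  next
    case False
    have c: "- (y-1) < KK p i" using kb1 kbi False by simp
    obtain l where l: "b+1 \<le> l" "l < i" "KK p l = -(y-1)" "PP p l"
      using KK_ivt[OF m1, of "b+1" i "-(y-1)"] less.prems kb1 c by auto
    have "\<exists>n. isDef (CC p n (-i, y-1))"
      using less.hyps[of i l "y-1"] l less.prems by simp
    then obtain n where "isDef (CC p n (-i, y-1))" by blast
    then obtain s c where "CC p n (-i, y-1) = Def s c" using isDef_ex by blast
    then have "sumbit (CC p n (-i, y-1)) = Some s" by simp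
    then show ?thesis using that by blast
  qed
  define n where "n = max (max n1 n2) 1"
  have "CC p n (-i+1, y) = CC p n1 (-i+1, y)"
    using CC_def_persist[where p=p and n=n1 and u="(-i+1,y)" and k=n] n1 n_def by simp
  then obtain s' c' where e: "CC p n (-i+1, y) = Def s' c'" using n1 isDef_ex by metis
  have so: "sumbit (CC p n (-i, y-1)) = Some s''"
    using CC_sumbit_persist[where p=p and n=n2 and u="(-i,y-1)" and k=n] n2 n_def by simp
  show ?case
  proof (cases "isDef (CC p n (-i, y))")
    case True then show ?thesis by blast
  next
    case False
    have "y \<noteq> - KK p i" using kb1 kbi by simp
    then have "init_config p (-i, y) = Undef" by (simp add: init_path[OF m1])
    then have u: "CC p n (-i, y) = Undef" using CC_init_or_def[where p=p and n=n and u="(-i,y)"] False by auto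
    have "isDef (local_step (CC p n) (-i, y))"
      by (rule local_undef[of "CC p n" "(-i,y)" s' c' s'']) (use u e so in simp_all)
    then have "isDef (CC p (Suc n) (-i, y))" using CC_Suc_late[OF m1, of n] n_def by simp
    then show ?thesis by blast
  qed
qed

lemma sum_ev:
  assumes "y + KK p i = 0 \<or> (\<exists>l. PP p l)" and "0 \<le> y + KK p i"
  shows "\<exists>n. sumbit (CC p n (-i, y)) \<noteq> None"
proof (cases "y + KK p i = 0")
  case True
  then have "sumbit (CC p 0 (-i, y)) = Some (PP p i)" by (simp add: init_path[OF m1])
  then show ?thesis by blast
next
  case False
  then obtain l where l: "PP p l" using assms by blast
  have "1 \<le> y + KK p i" using False assms by simp
  then obtain b where "b < i" "KK p b = -y" "PP p b" using path_end[OF l] by blast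
  then obtain n where "isDef (CC p n (-i, y))" using def_ev by blast
  then show ?thesis using isDef_sumbit by blast
qed

end


definition dsum :: "(nat \<Rightarrow> bool) \<Rightarrow> nat \<Rightarrow> int" where
  "dsum b n = (\<Sum>j<n. of_bool (b j) * 2 ^ j)"

lemma dsum_Suc: "dsum b (Suc n) = dsum b n + of_bool (b n) * 2 ^ n"
  by (simp add: dsum_def)

lemma dsum_ge0: "0 \<le> dsum b n"
  by (simp add: dsum_def sum_nonneg)

lemma dsum_less: "dsum b n < 2 ^ n"
proof (induction n)
  case 0 then show ?case by (simp add: dsum_def)
next
  case (Suc n)
  have "of_bool (b n) * (2::int) ^ n \<le> 2 ^ n" by simp
  then have "dsum b (Suc n) < 2^n + 2^n" using Suc dsum_Suc[of b n] by linarith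
  then show ?case by simp
qed

lemma dsum_shift: "dsum b (Suc n) = of_bool (b 0) + 2 * dsum (\<lambda>j. b (Suc j)) n"
proof (induction n)
  case 0 then show ?case by (simp add: dsum_def)
next
  case (Suc n)
  show ?case using Suc dsum_Suc[of b "Suc n"] dsum_Suc[of "\<lambda>j. b (Suc j)" n] by simp
qed

lemma dsum_mod: "dsum b (Suc n) mod 2 ^ n = dsum b n"
proof -
  have "dsum b (Suc n) mod 2 ^ n = dsum b n mod 2 ^ n" unfolding dsum_Suc by simp
  also have "\<dots> = dsum b n" using dsum_ge0 dsum_less by simp
  finally show ?thesis .
qed

lemma Rep_digits: "Rep_z2 (z2_of_digits b) = dsum b"
proof -
  have "z2_of_digits b = Abs_z2 (dsum b)" by (simp add: z2_of_digits_def dsum_def[abs_def])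
  moreover have "dsum b \<in> {a :: nat \<Rightarrow> int. \<forall>n. 0 \<le> a n \<and> a n < 2 ^ n \<and> a (Suc n) mod 2 ^ n = a n}"
    using dsum_ge0 dsum_less dsum_mod by blast
  ultimately show ?thesis using Abs_z2_inverse by simp
qed

lemma collatz_even:
  assumes "\<not> d 0"
  shows "collatzT (z2_of_digits d) = z2_of_digits (\<lambda>j. d (Suc j))"
proof -
  have "(\<lambda>n. if even (dsum d 1) then dsum d (Suc n) div 2
              else ((3 * dsum d (Suc n) + 1) div 2) mod 2 ^ n) = dsum (\<lambda>j. d (Suc j))"
  proof
    fix n
    have "dsum d 1 = 0" using assms by (simp add: dsum_def)
    moreover have "dsum d (Suc n) div 2 = dsum (\<lambda>j. d (Suc j)) n" using assms dsum_shift[of d n] by simp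
    ultimately show "(if even (dsum d 1) then dsum d (Suc n) div 2
              else ((3 * dsum d (Suc n) + 1) div 2) mod 2 ^ n) = dsum (\<lambda>j. d (Suc j)) n" by simp
  qed
  then show ?thesis unfolding collatzT_def Rep_digits by (simp add: z2_of_digits_def dsum_def[abs_def])
qed

lemma collatz_odd:
  assumes "d 0" and "\<And>n. ((3 * dsum d (Suc n) + 1) div 2) mod 2 ^ n = dsum e n"
  shows "collatzT (z2_of_digits d) = z2_of_digits e"
proof -
  have "(\<lambda>n. if even (dsum d 1) then dsum d (Suc n) div 2
              else ((3 * dsum d (Suc n) + 1) div 2) mod 2 ^ n) = dsum e"
  proof
    fix n
    have "dsum d 1 = 1" using assms by (simp add: dsum_def)
    then show "(if even (dsum d 1) then dsum d (Suc n) div 2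
              else ((3 * dsum d (Suc n) + 1) div 2) mod 2 ^ n) = dsum e n" using assms(2) by simp
  qed
  then show ?thesis unfolding collatzT_def Rep_digits by (simp add: z2_of_digits_def dsum_def[abs_def])
qed

lemma z2_mod2_digits: "z2_mod2 (z2_of_digits d) = of_bool (d 0)"
  unfolding z2_mod2_def Rep_digits by (simp add: dsum_def)

lemma carry_step: "(s::bool) = odd (of_bool a + of_bool b + of_bool c :: nat) \<Longrightarrow>
   (of_bool s + of_bool b + of_bool c :: int) = of_bool a + 2 * of_bool (of_bool s + of_bool b + of_bool c \<ge> (2::nat))"
  by (cases a; cases b; cases c) auto

context fixes p :: "bool list" assumes m1: "1 \<le> length p" begin

lemma L_sumbit: "sumbit (CC p n u) = Some s \<Longrightarrow> sumbit (limit_config p u) = Some s"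
proof -
  assume a: "sumbit (CC p n u) = Some s"
  obtain N where N: "\<forall>k\<ge>N. CC p k u = limit_config p u" using limit_eq by blast
  have "sumbit (CC p (max n N) u) = Some s"
    using CC_sumbit_persist[where p=p and n=n and u=u and k="max n N"] a by simp
  moreover have "CC p (max n N) u = limit_config p u" using N by simp
  ultimately show ?thesis by simp
qed

lemma L_Def: "CC p n u = Def s c \<Longrightarrow> limit_config p u = Def s c"
proof -
  assume a: "CC p n u = Def s c"
  obtain N where N: "\<forall>k\<ge>N. CC p k u = limit_config p u" using limit_eq by blast
  have "CC p (max n N) u = CC p n u"
    using CC_def_persist[where p=p and n=n and u=u and k="max n N"] a by simp
  moreover have "CC p (max n N) u = limit_config p u" using N by simp
  ultimately show ?thesis using a by simp
qed

lemma L_good: "goodDef p (limit_config p) u"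
proof -
  obtain N1 where N1: "\<forall>k\<ge>N1. CC p k u = limit_config p u" using limit_eq by blast
  obtain N2 where N2: "\<forall>k\<ge>N2. CC p k (vadd u dirE) = limit_config p (vadd u dirE)" using limit_eq by blast
  obtain N3 where N3: "\<forall>k\<ge>N3. CC p k (vadd u dirS) = limit_config p (vadd u dirS)" using limit_eq by blast
  define n where "n = max N1 (max N2 N3)"
  have e1: "CC p n u = limit_config p u" using N1 n_def by simp
  have e2: "CC p n (vadd u dirE) = limit_config p (vadd u dirE)" using N2 n_def by simp
  have e3: "CC p n (vadd u dirS) = limit_config p (vadd u dirS)" using N3 n_def by simp
  have "goodDef p (CC p n) u" by (rule good_inv[OF m1])
  then show ?thesis unfolding goodDef_def e1 e2 e3 .
qed

end


definition uu :: "bool list \<Rightarrow> int \<Rightarrow> nat \<Rightarrow> bool" where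
  "uu p i j = the (sumbit (limit_config p (-(i + int j), - KK p i)))"
definition cc :: "bool list \<Rightarrow> int \<Rightarrow> nat \<Rightarrow> bool" where
  "cc p i j = carry (limit_config p (-(i + int j), - KK p i))"
definition ll :: "bool list \<Rightarrow> int \<Rightarrow> nat \<Rightarrow> bool" where
  "ll p i j = (if j = 0 then False else the (sumbit (limit_config p (-(i + int j), - KK p i - 1))))"

context fixes p :: "bool list" assumes m1: "1 \<le> length p" begin

lemma base0: "PP p i \<Longrightarrow> uu p i 0 = True \<and> cc p i 0 = True"
proof -
  assume P: "PP p i"
  have "limit_config p (-i, -KK p i) = Def True True"
    by (rule L_Def[OF m1, of 1]) (rule step1(1)[OF m1 P])
  then show ?thesis by (simp add: uu_def cc_def)
qed

lemma rel:
  assumes P: "PP p i"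
  shows "of_bool (uu p i (Suc j)) + of_bool (uu p i j) + of_bool (cc p i j)
         = (of_bool (ll p i (Suc j)) + 2 * of_bool (cc p i (Suc j)) :: int)"
proof -
  define u where "u = (-(i + int (Suc j)), - KK p i)"
  have k1: "KK p (i+1) = KK p i + 1" using KK_Suc[OF m1, of i] P by simp
  have k2: "KK p (i+1) \<le> KK p (i + int (Suc j))" using KK_mono[OF m1, of "i+1" "i + int (Suc j)"] by simp
  have k3: "KK p (i+1) \<le> KK p (i + int (Suc j) + 1)" using KK_mono[OF m1, of "i+1" "i + int (Suc j) + 1"] by simp
  obtain n where "isDef (CC p n u)" using def_ev[OF m1, of i "i + int (Suc j)" "- KK p i"] P u_def by auto
  then obtain s c where "CC p n u = Def s c" using isDef_ex[OF m1] by blast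
  then have Lu: "limit_config p u = Def s c" by (rule L_Def[OF m1])
  have ns: "\<not> seed p u"
  proof
    assume "seed p u"
    then obtain l where l: "PP p l" "u = (-l+1, -KK p l)" unfolding seed_def by blast
    then have "l = i + int (Suc j) + 1" "KK p l = KK p i" using u_def by auto
    then show False using k1 k3 by simp
  qed
  have iu: "init_config p u = Undef" unfolding u_def init_path[OF m1] using k1 k2 by simp
  obtain s' c' where e: "limit_config p (vadd u dirE) = Def s' c'"
    and ce: "c = (of_bool s + of_bool s' + of_bool c' \<ge> (2::nat))"
    and so: "\<exists>s''. sumbit (limit_config p (vadd u dirS)) = Some s'' \<and> s = odd (of_bool s'' + of_bool s' + of_bool c' :: nat)"
    using L_good[OF m1, of u] Lu ns iu unfolding goodDef_def by blast
  obtain s'' where s1: "sumbit (limit_config p (vadd u dirS)) = Some s''"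
    and s2: "s = odd (of_bool s'' + of_bool s' + of_bool c' :: nat)" using so by blast
  have vE: "vadd u dirE = (-(i + int j), - KK p i)" unfolding u_def by simp
  have vS: "vadd u dirS = (-(i + int (Suc j)), - KK p i - 1)" unfolding u_def by simp
  have a1: "uu p i (Suc j) = s" "cc p i (Suc j) = c" using Lu u_def by (simp_all add: uu_def cc_def)
  have a2: "uu p i j = s'" "cc p i j = c'" using e vE by (simp_all add: uu_def cc_def)
  have a3: "ll p i (Suc j) = s''" using s1 vS by (simp add: ll_def)
  show ?thesis using carry_step[OF s2] a1 a2 a3 ce by simp
qed

lemma carry_id: "PP p i \<Longrightarrow>
  dsum (uu p i) (Suc N) + 2 * dsum (uu p i) N + 1 = dsum (ll p i) (Suc N) + 2 ^ Suc N * of_bool (cc p i N)"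
proof (induction N)
  case 0
  then show ?case using base0[OF 0] by (simp add: dsum_def ll_def)
next
  case (Suc N)
  have r: "of_bool (uu p i (Suc N)) + of_bool (uu p i N) + of_bool (cc p i N)
         = (of_bool (ll p i (Suc N)) + 2 * of_bool (cc p i (Suc N)) :: int)" by (rule rel[OF Suc.prems])
  have r2: "2 ^ Suc N * (of_bool (uu p i (Suc N)) + of_bool (uu p i N) + of_bool (cc p i N))
         = (2 ^ Suc N * (of_bool (ll p i (Suc N)) + 2 * of_bool (cc p i (Suc N))) :: int)" using r by simp
  show ?case using Suc.IH[OF Suc.prems] r2 dsum_Suc[of "uu p i" "Suc N"] dsum_Suc[of "uu p i" N]
      dsum_Suc[of "ll p i" "Suc N"]
    by (simp add: algebra_simps)
qed

lemma odd_step: "PP p i \<Longrightarrow>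
   ((3 * dsum (uu p i) (Suc n) + 1) div 2) mod 2 ^ n = dsum (\<lambda>j. ll p i (Suc j)) n"
proof -
  assume P: "PP p i"
  define T where "T = dsum (\<lambda>j. ll p i (Suc j)) n"
  have S: "dsum (ll p i) (Suc n) = 2 * T" using dsum_shift[of "ll p i" n] by (simp add: T_def ll_def)
  have W: "dsum (uu p i) (Suc n) = dsum (uu p i) n + of_bool (uu p i n) * 2 ^ n" by (rule dsum_Suc)
  have "3 * dsum (uu p i) (Suc n) + 1 = 2 * (T + 2 ^ n * (of_bool (cc p i n) + of_bool (uu p i n)))"
    using carry_id[OF P, of n] S W by (simp add: algebra_simps)
  then have "(3 * dsum (uu p i) (Suc n) + 1) div 2 = T + 2 ^ n * (of_bool (cc p i n) + of_bool (uu p i n))"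
    by simp
  then have "((3 * dsum (uu p i) (Suc n) + 1) div 2) mod 2 ^ n = T mod 2 ^ n" by simp
  also have "\<dots> = T" unfolding T_def using dsum_ge0 dsum_less by simp
  finally show ?thesis unfolding T_def .
qed

end


lemma Rep_props: "0 \<le> Rep_z2 z n" "Rep_z2 z n < 2 ^ n" "Rep_z2 z (Suc n) mod 2 ^ n = Rep_z2 z n"
  using Rep_z2[of z] by auto

lemma Rep_chain: "k \<le> m \<Longrightarrow> Rep_z2 z m mod 2 ^ k = Rep_z2 z k"
proof (induction m)
  case 0 then show ?case using Rep_props[of z 0] by simp
next
  case (Suc m)
  show ?case
  proof (cases "k = Suc m")
    case True then show ?thesis using Rep_props[of z "Suc m"] by simp
  next
    case False
    then have km: "k \<le> m" using Suc.prems by simp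
    have d: "(2::int) ^ k dvd 2 ^ m" using km by (simp add: le_imp_power_dvd)
    have "Rep_z2 z (Suc m) mod 2 ^ k = Rep_z2 z (Suc m) mod 2 ^ m mod 2 ^ k"
      using mod_mod_cancel[OF d] by simp
    also have "\<dots> = Rep_z2 z m mod 2 ^ k" using Rep_props(3)[of z m] by simp
    finally show ?thesis using Suc.IH[OF km] by simp
  qed
qed

lemma div2_mod: "(M::int) \<ge> 0 \<Longrightarrow> (x div 2) mod M = (x mod (2 * M)) div 2"
  using zmod_zmult2_eq[of M x 2] by simp

definition cf :: "(nat \<Rightarrow> int) \<Rightarrow> nat \<Rightarrow> int" where
  "cf a n = (if even (a 1) then a (Suc n) div 2 else ((3 * a (Suc n) + 1) div 2) mod 2 ^ n)"

lemma cf_mem: "cf (Rep_z2 z) \<in> {a :: nat \<Rightarrow> int. \<forall>n. 0 \<le> a n \<and> a n < 2 ^ n \<and> a (Suc n) mod 2 ^ n = a n}"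
proof (clarify, intro conjI)
  fix n
  let ?a = "Rep_z2 z"
  show "0 \<le> cf ?a n" unfolding cf_def using Rep_props(1)[of z "Suc n"] by simp
  show "cf ?a n < 2 ^ n"
  proof (cases "even (?a 1)")
    case True
    have "?a (Suc n) < 2 * 2 ^ n" using Rep_props(2)[of z "Suc n"] by simp
    moreover have "2 * (?a (Suc n) div 2) \<le> ?a (Suc n)" by simp
    ultimately have "?a (Suc n) div 2 < 2 ^ n" by linarith
    then show ?thesis using True unfolding cf_def by simp
  next
    case False then show ?thesis unfolding cf_def by simp
  qed
  show "cf ?a (Suc n) mod 2 ^ n = cf ?a n"
  proof (cases "even (?a 1)")
    case True
    have "(?a (Suc (Suc n)) div 2) mod 2 ^ n = (?a (Suc (Suc n)) mod (2 * 2 ^ n)) div 2"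
      by (rule div2_mod) simp
    also have "\<dots> = ?a (Suc n) div 2" using Rep_props(3)[of z "Suc n"] by simp
    finally show ?thesis using True unfolding cf_def by simp
  next
    case False
    have d: "(2::int) ^ n dvd 2 ^ Suc n" by simp
    have "((3 * ?a (Suc (Suc n)) + 1) div 2) mod 2 ^ Suc n mod 2 ^ n
        = ((3 * ?a (Suc (Suc n)) + 1) div 2) mod 2 ^ n" by (rule mod_mod_cancel[OF d])
    also have "\<dots> = ((3 * ?a (Suc (Suc n)) + 1) mod (2 * 2 ^ n)) div 2" by (rule div2_mod) simp
    also have "(3 * ?a (Suc (Suc n)) + 1) mod (2 * 2 ^ n) = (3 * (?a (Suc (Suc n)) mod (2 * 2 ^ n)) + 1) mod (2 * 2 ^ n)"
      by (metis mod_add_left_eq mod_mult_right_eq)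
    also have "\<dots> = (3 * ?a (Suc n) + 1) mod (2 * 2 ^ n)" using Rep_props(3)[of z "Suc n"] by simp
    also have "\<dots> div 2 = ((3 * ?a (Suc n) + 1) div 2) mod 2 ^ n" by (rule div2_mod[symmetric]) simp
    finally show ?thesis using False unfolding cf_def by simp
  qed
qed

lemma Rep_collatz: "Rep_z2 (collatzT z) = cf (Rep_z2 z)"
proof -
  have "collatzT z = Abs_z2 (cf (Rep_z2 z))" unfolding collatzT_def cf_def[abs_def] by simp
  then show ?thesis using Abs_z2_inverse[OF cf_mem] by simp
qed

lemma parityQ_Suc: "parityQ z (Suc i) = parityQ (collatzT z) i"
  unfolding parityQ_def by (simp only: funpow_Suc_right comp_apply)

lemma odd_unique:
  fixes x x' :: int
  assumes "odd x" "odd x'" "0 \<le> x" "x < 2 ^ Suc n" "0 \<le> x'" "x' < 2 ^ Suc n"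
    and "((3 * x + 1) div 2) mod 2 ^ n = ((3 * x' + 1) div 2) mod 2 ^ n"
  shows "x = x'"
proof (rule ccontr)
  assume ne: "x \<noteq> x'"
  have "(2::int) ^ n dvd (3 * x + 1) div 2 - (3 * x' + 1) div 2" using assms(7) by (simp add: mod_eq_dvd_iff)
  then have d2: "2 * 2 ^ n dvd 2 * ((3 * x + 1) div 2 - (3 * x' + 1) div 2)" by (rule mult_dvd_mono[OF dvd_refl])
  have ev1: "even (3 * x + 1)" using assms(1) by simp
  have ev2: "even (3 * x' + 1)" using assms(2) by simp
  have q1: "2 * ((3 * x + 1) div 2) = 3 * x + 1" using ev1 by (rule dvd_mult_div_cancel)
  have q2: "2 * ((3 * x' + 1) div 2) = 3 * x' + 1" using ev2 by (rule dvd_mult_div_cancel)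
  have "2 * ((3 * x + 1) div 2 - (3 * x' + 1) div 2) = 3 * (x - x')"
    unfolding right_diff_distrib q1 q2 by (simp add: algebra_simps)
  then have "(2::int) ^ Suc n dvd 3 * (x - x')" using d2 by simp
  moreover have "coprime ((2::int) ^ Suc n) 3" by simp
  ultimately have dv: "(2::int) ^ Suc n dvd x - x'" using coprime_dvd_mult_right_iff by blast
  have "x - x' \<noteq> 0" using ne by simp
  then have "\<bar>(2::int) ^ Suc n\<bar> \<le> \<bar>x - x'\<bar>" using dvd_imp_le_int dv by blast
  then show False using assms(3-6) by simp
qed

lemma parityQ_inj_Rep: "parityQ a = parityQ b \<Longrightarrow> Rep_z2 a n = Rep_z2 b n"
proof (induction n arbitrary: a b)
  case 0
  then show ?case using Rep_props(1,2)[of a 0] Rep_props(1,2)[of b 0] by simp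
next
  case (Suc n)
  let ?A = "Rep_z2 a" and ?B = "Rep_z2 b"
  have "parityQ a 0 = parityQ b 0" using Suc.prems by simp
  then have "nat (?A 1 mod 2) = nat (?B 1 mod 2)" by (simp add: parityQ_def z2_mod2_def)
  moreover have "0 \<le> ?A 1" "?A 1 < 2" "0 \<le> ?B 1" "?B 1 < 2" using Rep_props(1,2)[of a 1] Rep_props(1,2)[of b 1] by simp_all
  ultimately have A1: "?A 1 = ?B 1" by simp
  have "parityQ (collatzT a) = parityQ (collatzT b)"
  proof
    fix i show "parityQ (collatzT a) i = parityQ (collatzT b) i" using Suc.prems parityQ_Suc by metis
  qed
  then have "Rep_z2 (collatzT a) n = Rep_z2 (collatzT b) n" by (rule Suc.IH)
  then have cfe: "cf ?A n = cf ?B n" by (simp add: Rep_collatz)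
  have mA: "?A (Suc n) mod 2 = ?A 1" using Rep_chain[of 1 "Suc n" a] by simp
  have mB: "?B (Suc n) mod 2 = ?B 1" using Rep_chain[of 1 "Suc n" b] by simp
  show ?case
  proof (cases "even (?A 1)")
    case True
    then have "?A (Suc n) div 2 = ?B (Suc n) div 2" using cfe A1 unfolding cf_def by simp
    moreover have "?A (Suc n) mod 2 = ?B (Suc n) mod 2" using mA mB A1 by simp
    ultimately show ?thesis by (metis div_mult_mod_eq)
  next
    case False
    have e: "((3 * ?A (Suc n) + 1) div 2) mod 2 ^ n = ((3 * ?B (Suc n) + 1) div 2) mod 2 ^ n"
      using cfe A1 False unfolding cf_def by simp
    have oA: "odd (?A (Suc n))" using mA False by (simp add: odd_iff_mod_2_eq_one)
    have oB: "odd (?B (Suc n))" using mB A1 False by (simp add: odd_iff_mod_2_eq_one)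
    show ?thesis by (rule odd_unique[OF oA oB _ _ _ _ e]) (use Rep_props(1,2)[of a "Suc n"] Rep_props(1,2)[of b "Suc n"] in simp_all)
  qed
qed

lemma parityQ_inj: "inj parityQ"
proof (rule injI)
  fix a b assume "parityQ a = parityQ b"
  then have "Rep_z2 a = Rep_z2 b" using parityQ_inj_Rep by blast
  then show "a = b" using Rep_z2_inject by blast
qed



context fixes p :: "bool list" assumes m1: "1 \<le> length p" begin

lemma uu_path: "uu p i 0 = PP p i"
proof -
  have "sumbit (CC p 0 (-i, -KK p i)) = Some (PP p i)" by (simp add: init_path[OF m1])
  then have "sumbit (limit_config p (-i, -KK p i)) = Some (PP p i)" by (rule L_sumbit[OF m1])
  then show ?thesis by (simp add: uu_def)
qed

definition ww :: "nat \<Rightarrow> z2" where "ww k = z2_of_digits (uu p (int k))"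

lemma ww_step: "collatzT (ww k) = ww (Suc k)"
proof (cases "PP p (int k)")
  case True
  have k1: "KK p (int k + 1) = KK p (int k) + 1" using KK_Suc[OF m1, of "int k"] True by simp
  have "collatzT (z2_of_digits (uu p (int k))) = z2_of_digits (\<lambda>j. ll p (int k) (Suc j))"
    by (rule collatz_odd) (use base0[OF m1 True] odd_step[OF m1 True] in auto)
  moreover have "(\<lambda>j. ll p (int k) (Suc j)) = uu p (int (Suc k))"
  proof
    fix j
    have k1': "KK p (int (Suc k)) = KK p (int k) + 1" using k1 by (simp add: add.commute)
    have e1: "(-(int k + int (Suc j)), -KK p (int k) - 1) = (-(int (Suc k) + int j), -KK p (int (Suc k)))"
      using k1' by simp
    have "ll p (int k) (Suc j) = the (sumbit (limit_config p (-(int k + int (Suc j)), -KK p (int k) - 1)))"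
      by (simp add: ll_def)
    also have "\<dots> = the (sumbit (limit_config p (-(int (Suc k) + int j), -KK p (int (Suc k)))))"
      by (simp only: e1)
    also have "\<dots> = uu p (int (Suc k)) j" by (simp add: uu_def)
    finally show "ll p (int k) (Suc j) = uu p (int (Suc k)) j" .
  qed
  ultimately show ?thesis unfolding ww_def by simp
next
  case False
  have k1: "KK p (int k + 1) = KK p (int k)" using KK_Suc[OF m1, of "int k"] False by simp
  have "collatzT (z2_of_digits (uu p (int k))) = z2_of_digits (\<lambda>j. uu p (int k) (Suc j))"
    by (rule collatz_even) (use uu_path False in simp)
  moreover have "(\<lambda>j. uu p (int k) (Suc j)) = uu p (int (Suc k))"
  proof
    fix j
    have k1': "KK p (int (Suc k)) = KK p (int k)" using k1 by (simp add: add.commute)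
    have e1: "(-(int k + int (Suc j)), -KK p (int k)) = (-(int (Suc k) + int j), -KK p (int (Suc k)))"
      using k1' by simp
    have "uu p (int k) (Suc j) = the (sumbit (limit_config p (-(int k + int (Suc j)), -KK p (int k))))"
      by (simp add: uu_def)
    also have "\<dots> = the (sumbit (limit_config p (-(int (Suc k) + int j), -KK p (int (Suc k)))))"
      by (simp only: e1)
    also have "\<dots> = uu p (int (Suc k)) j" by (simp add: uu_def)
    finally show "uu p (int k) (Suc j) = uu p (int (Suc k)) j" .
  qed
  ultimately show ?thesis unfolding ww_def by simp
qed

lemma ww_iter: "(collatzT ^^ k) (ww 0) = ww k"
  by (induction k) (simp_all add: ww_step)

lemma ww_parity: "parityQ (ww 0) = periodic_seq p"
proof
  fix k
  have "parityQ (ww 0) k = z2_mod2 (ww k)" by (simp add: parityQ_def ww_iter)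
  also have "\<dots> = of_bool (PP p (int k))" unfolding ww_def z2_mod2_digits uu_path ..
  also have "\<dots> = periodic_seq p k"
    by (simp add: PP_def periodic_seq_def nat_mod_distrib)
  finally show "parityQ (ww 0) k = periodic_seq p k" .
qed

lemma ww0: "ww 0 = z2_of_digits (\<lambda>j. the (sumbit (limit_config p (- int j, 0))))"
  unfolding ww_def uu_def by (simp add: KK_0[OF m1])

lemma KK_const: "\<not> (\<exists>l. PP p l) \<Longrightarrow> 0 \<le> i \<Longrightarrow> KK p i = 0"
proof -
  assume np: "\<not> (\<exists>l. PP p l)" and i: "0 \<le> i"
  show ?thesis using i
  proof (induction i rule: int_ge_induct)
    case base then show ?case using KK_0[OF m1] by simp
  next
    case (step i) then show ?case using KK_Suc[OF m1, of i] np by simp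
  qed
qed

lemma part1: "x \<le> 0 \<Longrightarrow> sumbit (limit_config p (x, 0)) \<noteq> None"
proof -
  assume x: "x \<le> 0"
  have k0: "0 \<le> KK p (-x)" using KK_mono[OF m1, of 0 "-x"] x KK_0[OF m1] by simp
  have "0 + KK p (-x) = 0 \<or> (\<exists>l. PP p l)" using KK_const[of "-x"] x by auto
  then obtain n where "sumbit (CC p n (-(-x), 0)) \<noteq> None" using sum_ev[OF m1, of 0 "-x"] k0 by auto
  then obtain s where "sumbit (CC p n (x, 0)) = Some s" by auto
  then have "sumbit (limit_config p (x, 0)) = Some s" by (rule L_sumbit[OF m1])
  then show ?thesis by simp
qed

end

theorem mainTheorem12:
  fixes p :: "bool list"
  assumes "length p \<ge> 1"
  shows "(\<forall>x::int. x \<le> 0 \<longrightarrow>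
            (\<exists>N. \<forall>n\<ge>N. (cqca_step ^^ n) (init_config p) (x, 0) = limit_config p (x, 0))
          \<and> sumbit (limit_config p (x, 0)) \<noteq> None)
       \<and> z2_of_digits (\<lambda>j. the (sumbit (limit_config p (- int j, 0)))) = collatz_cyclic p"
proof (intro conjI allI impI)
  fix x :: int assume "x \<le> 0"
  show "\<exists>N. \<forall>n\<ge>N. (cqca_step ^^ n) (init_config p) (x, 0) = limit_config p (x, 0)"
    by (rule limit_eq)
  show "sumbit (limit_config p (x, 0)) \<noteq> None" by (rule part1[OF assms \<open>x \<le> 0\<close>])
next
  have "collatz_cyclic p = inv parityQ (parityQ (ww p 0))"
    unfolding collatz_cyclic_def ww_parity[OF assms] ..
  also have "\<dots> = ww p 0" by (rule inv_f_f[OF parityQ_inj])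
  finally show "z2_of_digits (\<lambda>j. the (sumbit (limit_config p (- int j, 0)))) = collatz_cyclic p"
    using ww0[OF assms] by simp
qed


end
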